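(* Let $C=(C_{i,j})$ be an $m\times n$ evolutionary stable (ES) configuration with $m,n>2$. Then $n$ is divisible by $3$, $C_{m,j}=1$ for all $1\le j\le n$, and row $m-1$ is the string $101\,101\cdots101$, i.e.\ $C_{m-1,j}=0$ if $j\equiv 2\pmod 3$ and $C_{m-1,j}=1$ otherwise.
   Context: An $m\times n$ configuration is a $0$-$1$ matrix $C=(C_{i,j})$, $1\le i\le m$, $1\le j\le n$; $C_{i,j}=1$ means lot $(i,j)$ is occupied by a house. Row $1$ is the northernmost, row $m$ the southernmost; column $1$ westernmost, column $n$ easternmost. A house at $(i,j)$ is blocked from sunlight if the three lots $(i,j-1)$, $(i,j+1)$, $(i+1,j)$ all lie inside the grid and are all occupied (lots outside the grid never obstruct sunlight). $C$ is permissible if no house is blocked, and maximal if it is permissible and setting any single empty lot to $1$ yields a non-permissible configuration. A maximal configuration is resistant to predators if, for every empty lot, putting a house on it results in that new house being blocked; it is resistant to altruists if, for every empty lot, putting a house on it results in some other (already existing) house being blocked. An ES configuration is a maximal configuration resistant to both predators and altruists. *)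

theory Defs
  imports Main
begin

text \<open>A configuration is a function C :: nat => nat => bool; only the values
  C i j with 1 <= i <= m and 1 <= j <= n are relevant (True = occupied).\<close>

definition in_grid :: "nat \<Rightarrow> nat \<Rightarrow> nat \<Rightarrow> nat \<Rightarrow> bool" where
  "in_grid m n i j \<longleftrightarrow> 1 \<le> i \<and> i \<le> m \<and> 1 \<le> j \<and> j \<le> n"

definition blocked :: "nat \<Rightarrow> nat \<Rightarrow> (nat \<Rightarrow> nat \<Rightarrow> bool) \<Rightarrow> nat \<Rightarrow> nat \<Rightarrow> bool" where
  "blocked m n C i j \<longleftrightarrow> in_grid m n i j \<and> C i j \<and>
     2 \<le> j \<and> in_grid m n i (j - 1) \<and> C i (j - 1) \<and>
     in_grid m n i (j + 1) \<and> C i (j + 1) \<and>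
     in_grid m n (i + 1) j \<and> C (i + 1) j"

definition permissible :: "nat \<Rightarrow> nat \<Rightarrow> (nat \<Rightarrow> nat \<Rightarrow> bool) \<Rightarrow> bool" where
  "permissible m n C \<longleftrightarrow> (\<forall>i j. in_grid m n i j \<longrightarrow> \<not> blocked m n C i j)"

definition add_house :: "(nat \<Rightarrow> nat \<Rightarrow> bool) \<Rightarrow> nat \<Rightarrow> nat \<Rightarrow> (nat \<Rightarrow> nat \<Rightarrow> bool)" where
  "add_house C i j = (\<lambda>a b. if a = i \<and> b = j then True else C a b)"

definition maximal :: "nat \<Rightarrow> nat \<Rightarrow> (nat \<Rightarrow> nat \<Rightarrow> bool) \<Rightarrow> bool" where
  "maximal m n C \<longleftrightarrow> permissible m n C \<and>
     (\<forall>i j. in_grid m n i j \<and> \<not> C i j \<longrightarrow> \<not> permissible m n (add_house C i j))"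

definition resistant_predators :: "nat \<Rightarrow> nat \<Rightarrow> (nat \<Rightarrow> nat \<Rightarrow> bool) \<Rightarrow> bool" where
  "resistant_predators m n C \<longleftrightarrow> maximal m n C \<and>
     (\<forall>i j. in_grid m n i j \<and> \<not> C i j \<longrightarrow> blocked m n (add_house C i j) i j)"

definition resistant_altruists :: "nat \<Rightarrow> nat \<Rightarrow> (nat \<Rightarrow> nat \<Rightarrow> bool) \<Rightarrow> bool" where
  "resistant_altruists m n C \<longleftrightarrow> maximal m n C \<and>
     (\<forall>i j. in_grid m n i j \<and> \<not> C i j \<longrightarrow>
        (\<exists>a b. in_grid m n a b \<and> C a b \<and> blocked m n (add_house C i j) a b))"

definition ES_config :: "nat \<Rightarrow> nat \<Rightarrow> (nat \<Rightarrow> nat \<Rightarrow> bool) \<Rightarrow> bool" where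
  "ES_config m n C \<longleftrightarrow> maximal m n C \<and> resistant_predators m n C \<and> resistant_altruists m n C"

end

theory Submission
  imports Defs
begin

lemma lin_aux: "(a::int) - b + gT \<le> 3*(c - 1) \<Longrightarrow> gS \<le> gT + gz \<Longrightarrow> d - a + gz \<le> 3 \<Longrightarrow> d - b + gS \<le> 3*c"
  by (simp add: algebra_simps)

lemma minmax_card1:
  fixes S :: "nat set"
  assumes "finite S" "S \<noteq> {}" "Min S = Max S"
  shows "card S = 1"
proof -
  have "\<forall>x\<in>S. x = Max S"
  proof
    fix x assume "x \<in> S"
    then have "Min S \<le> x" "x \<le> Max S" using assms(1) by simp_all
    then show "x = Max S" using assms(3) by simp
  qed
  moreover have "Max S \<in> S" using assms(1,2) by simp
  ultimately have "S = {Max S}" by blast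
  then obtain a where "S = {a}" by blast
  then show ?thesis by simp
qed

lemma gapA:
  fixes S :: "nat set"
  assumes "finite S" "S \<noteq> {}" "\<forall>x\<in>S. Suc x \<notin> S"
    "\<forall>x\<in>S. x < Max S \<longrightarrow> (\<exists>y\<in>S. x < y \<and> y \<le> x + 3)"
  shows "int (Max S) - int (Min S) + (if (\<exists>x\<in>S. x + 2 \<in> S) then 1 else 0) \<le> 3 * (int (card S) - 1)"
  using assms
proof (induction "card S" arbitrary: S rule: less_induct)
  case less
  have fS: "finite S" and neS: "S \<noteq> {}" and nadj: "\<forall>x\<in>S. Suc x \<notin> S"
    and succ: "\<forall>x\<in>S. x < Max S \<longrightarrow> (\<exists>y\<in>S. x < y \<and> y \<le> x + 3)" using less.prems by auto
  have mS: "Max S \<in> S" using fS neS by simp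
  show ?case
  proof (cases "card S = 1")
    case True
    then obtain a where Sa: "S = {a}" using card_1_singletonE by blast
    then show ?thesis by simp
  next
    case False
    have "card S > 0" using neS fS card_gt_0_iff by blast
    then have c2: "card S \<ge> 2" using False by linarith
    define T where "T = S - {Max S}"
    have fT: "finite T" using fS T_def by simp
    have cT: "card T = card S - 1" using T_def mS fS by simp
    have neT: "T \<noteq> {}" proof assume "T = {}" then have "card T = 0" by simp then show False using cT c2 by linarith qed
    define z where "z = Max T"
    have zT: "z \<in> T" using fT neT z_def by simp
    have zS: "z \<in> S" and zlt: "z < Max S" using zT T_def fS Max_ge[OF fS] by (auto simp: le_neq_implies_less)
    have TS: "\<forall>x\<in>T. x \<le> z" using fT z_def by simp
    have minS: "Min S \<noteq> Max S"
    proof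
      assume "Min S = Max S"
      then have "card S = 1" using minmax_card1 fS neS by blast
      then show False using c2 by simp
    qed
    have minT: "Min T = Min S"
    proof (rule Min_eqI[OF fT])
      show "Min S \<in> T" using minS fS neS T_def by simp
      show "\<And>y. y \<in> T \<Longrightarrow> Min S \<le> y" using T_def fS by simp
    qed
    have succT: "\<forall>x\<in>T. x < Max T \<longrightarrow> (\<exists>y\<in>T. x < y \<and> y \<le> x + 3)"
    proof (intro ballI impI)
      fix x assume xT: "x \<in> T" and xl: "x < Max T"
      have xS: "x \<in> S" and xM: "x < Max S" using xT T_def zlt xl z_def by auto
      obtain y where yS: "y \<in> S" "x < y" "y \<le> x + 3" using succ xS xM by blast
      show "\<exists>y\<in>T. x < y \<and> y \<le> x + 3"
      proof (cases "y = Max S")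
        case True
        then show ?thesis using zT xl z_def zlt yS by force
      next
        case False
        then show ?thesis using yS T_def by blast
      qed
    qed
    have IH: "int (Max T) - int (Min T) + (if (\<exists>x\<in>T. x + 2 \<in> T) then 1 else 0) \<le> 3 * (int (card T) - 1)"
      using less.hyps[of T] cT c2 fT neT nadj succT T_def by auto
    obtain y where yS: "y \<in> S" "z < y" "y \<le> z + 3" using succ zS zlt by blast
    have yM: "y = Max S"
    proof (rule ccontr)
      assume "y \<noteq> Max S" then have "y \<in> T" using yS T_def by simp
      then show False using TS yS by force
    qed
    have nz1: "Max S \<noteq> Suc z" using nadj zS mS by metis
    have g: "(if (\<exists>x\<in>S. x + 2 \<in> S) then 1 else 0) \<le> (if (\<exists>x\<in>T. x + 2 \<in> T) then 1 else 0) + (if Max S = z + 2 then (1::int) else 0)"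
    proof (cases "\<exists>x\<in>S. x + 2 \<in> S")
      case True
      then obtain x where x: "x \<in> S" "x + 2 \<in> S" by blast
      show ?thesis
      proof (cases "x + 2 = Max S")
        case True
        have "x \<noteq> Max S" using True by simp
        then have "x \<in> T" using x T_def by simp
        then have "x \<le> z" using TS by simp
        moreover have "z \<noteq> Suc x" using nadj x zS by metis
        ultimately have "z = x" using zlt True by linarith
        then show ?thesis using True by simp
      next
        case False
        have "x + 2 \<le> Max S" using x fS by simp
        then have "x \<noteq> Max S" by simp
        then have "x \<in> T" "x + 2 \<in> T" using x False T_def by auto
        then show ?thesis by auto
      qed
    qed simp
    have d: "int (Max S) - int z + (if Max S = z + 2 then 1 else 0) \<le> 3" using yM yS zlt nz1 by auto
    have "int (card S) - 1 = int (card T)" using cT c2 by simp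
    then show ?thesis using lin_aux[OF IH[unfolded minT] g[unfolded z_def] d[unfolded z_def]] by simp
  qed
qed

lemma lin_aux2: "3*((c::int) - 1) \<le> a - b \<Longrightarrow> d - a \<ge> 3 \<Longrightarrow> 3*c \<le> d - b"
  by arith

lemma gapB:
  fixes S :: "nat set"
  assumes "finite S" "S \<noteq> {}" "\<forall>x\<in>S. \<forall>y\<in>S. x < y \<longrightarrow> x + 3 \<le> y"
  shows "3 * (int (card S) - 1) \<le> int (Max S) - int (Min S)"
  using assms
proof (induction "card S" arbitrary: S rule: less_induct)
  case less
  have fS: "finite S" and neS: "S \<noteq> {}" and sep: "\<forall>x\<in>S. \<forall>y\<in>S. x < y \<longrightarrow> x + 3 \<le> y"
    using less.prems by auto
  have mS: "Max S \<in> S" using fS neS by simp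
  show ?case
  proof (cases "card S = 1")
    case True
    then obtain a where Sa: "S = {a}" using card_1_singletonE by blast
    then show ?thesis by simp
  next
    case False
    have "card S > 0" using neS fS card_gt_0_iff by blast
    then have c2: "card S \<ge> 2" using False by linarith
    define T where "T = S - {Max S}"
    have fT: "finite T" using fS T_def by simp
    have cT: "card T = card S - 1" using T_def mS fS by simp
    have neT: "T \<noteq> {}" proof assume "T = {}" then have "card T = 0" by simp then show False using cT c2 by linarith qed
    have zT: "Max T \<in> T" using fT neT by simp
    have zS: "Max T \<in> S" using zT T_def by blast
    have "Max T \<noteq> Max S" using zT T_def by blast
    moreover have "Max T \<le> Max S" using zS fS by simp
    ultimately have zlt: "Max T < Max S" by simp
    have minS: "Min S \<noteq> Max S"
    proof
      assume "Min S = Max S"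
      then have "card S = 1" using minmax_card1 fS neS by blast
      then show False using c2 by simp
    qed
    have minT: "Min T = Min S"
    proof (rule Min_eqI[OF fT])
      show "Min S \<in> T" using minS fS neS T_def by simp
      show "\<And>y. y \<in> T \<Longrightarrow> Min S \<le> y" using T_def fS by simp
    qed
    have IH: "3 * (int (card T) - 1) \<le> int (Max T) - int (Min T)"
      using less.hyps[of T] cT c2 fT neT sep T_def by auto
    have "Max T + 3 \<le> Max S" using sep zS mS zlt by blast
    then have d: "int (Max S) - int (Max T) \<ge> 3" by linarith
    have "int (card S) - 1 = int (card T)" using cT c2 by simp
    then show ?thesis using lin_aux2[OF IH[unfolded minT] d] by simp
  qed
qed

definition alt :: "nat set \<Rightarrow> nat set \<Rightarrow> bool" where
  "alt A B \<longleftrightarrow> (\<forall>x\<in>A. \<forall>y\<in>A. x < y \<longrightarrow> (\<exists>z\<in>B. x < z \<and> z < y))"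

definition cnt_rel :: "nat set \<Rightarrow> nat set \<Rightarrow> bool" where
  "cnt_rel U L \<longleftrightarrow> int (card L) + (if Min U < Min L then 1 else 0) + (if Max L < Max U then 1 else 0) = int (card U) + 1"

definition alt_hyps :: "nat set \<Rightarrow> nat set \<Rightarrow> bool" where
  "alt_hyps U L \<longleftrightarrow> finite U \<and> finite L \<and> U \<noteq> {} \<and> L \<noteq> {} \<and> U \<inter> L = {} \<and> alt U L \<and> alt L U"

lemma alt_hyps_sym: "alt_hyps U L \<Longrightarrow> alt_hyps L U"
  unfolding alt_hyps_def by blast

lemma cnt_rel_sym:
  assumes "alt_hyps U L" "cnt_rel L U"
  shows "cnt_rel U L"
proof -
  have h: "finite U" "finite L" "U \<noteq> {}" "L \<noteq> {}" "U \<inter> L = {}" using assms(1) unfolding alt_hyps_def by auto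
  have "Min U \<in> U" "Min L \<in> L" "Max U \<in> U" "Max L \<in> L"
    using Min_in[OF h(1) h(3)] Min_in[OF h(2) h(4)] Max_in[OF h(1) h(3)] Max_in[OF h(2) h(4)] by simp_all
  then have "Min U \<noteq> Min L" "Max U \<noteq> Max L" using h(5) by (metis IntI empty_iff)+
  then have e1: "(Min L < Min U) = (\<not> Min U < Min L)" and e2: "(Max U < Max L) = (\<not> Max L < Max U)" by auto
  have "int (card U) + (if Min L < Min U then 1 else 0) + (if Max U < Max L then 1 else 0) = int (card L) + 1"
    using assms(2) unfolding cnt_rel_def by simp
  then show ?thesis unfolding cnt_rel_def e1 e2 by (cases "Min U < Min L"; cases "Max L < Max U"; simp)
qed

lemma cnt_step:
  assumes H: "alt_hyps U L" and lt: "Max U < Max L"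
    and IH: "\<And>U' L'. card U' + card L' < card U + card L \<Longrightarrow> alt_hyps U' L' \<Longrightarrow> cnt_rel U' L'"
  shows "cnt_rel U L"
proof -
  have fU: "finite U" and fL: "finite L" and neU: "U \<noteq> {}" and neL: "L \<noteq> {}" and dj: "U \<inter> L = {}"
    and aUL: "alt U L" and aLU: "alt L U" using H unfolding alt_hyps_def by auto
  obtain z where z_def: "Max L = z" by blast
  have zL: "z \<in> L" using Max_in[OF fL neL] z_def by simp
  define L' where "L' = L - {z}"
  show ?thesis
  proof (cases "L' = {}")
    case True
    then have Lz: "L = {z}" using zL L'_def by blast
    have single: "\<forall>x\<in>U. x = Max U"
    proof
      fix x assume xU: "x \<in> U"
      show "x = Max U"
      proof (rule ccontr)
        assume "x \<noteq> Max U"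
        moreover have "x \<le> Max U" using xU fU by simp
        ultimately have "x < Max U" by simp
        moreover have "Max U \<in> U" using fU neU by simp
        ultimately obtain v where "v \<in> L" "x < v" "v < Max U" using aUL xU unfolding alt_def by blast
        then show False using Lz lt z_def by simp
      qed
    qed
    moreover have "Max U \<in> U" using fU neU by simp
    ultimately have Uu: "U = {Max U}" by blast
    obtain u where Uu2: "U = {u}" using Uu by blast
    have "u < z" using Uu2 lt z_def by simp
    then show ?thesis unfolding cnt_rel_def using Lz Uu2 by simp
  next
    case False
    have fL': "finite L'" using fL L'_def by simp
    have "card L' = card L - 1" using L'_def zL by simp
    moreover have "card L > 0" using fL zL card_gt_0_iff by blast
    ultimately have cL: "card L = card L' + 1" by linarith
    have H': "alt_hyps U L'"
      unfolding alt_hyps_def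
    proof (intro conjI)
      show "alt U L'" unfolding alt_def
      proof (intro ballI impI)
        fix x y assume xU: "x \<in> U" and yU: "y \<in> U" and xy: "x < y"
        obtain v where v: "v \<in> L" "x < v" "v < y" using aUL xU yU xy unfolding alt_def by blast
        have "y \<le> Max U" using fU yU by simp
        then have "v \<noteq> z" using v lt z_def by simp
        then show "\<exists>v\<in>L'. x < v \<and> v < y" using v L'_def by blast
      qed
      show "alt L' U" using aLU L'_def unfolding alt_def by blast
      show "finite U" by (rule fU)
      show "finite L'" by (rule fL')
      show "U \<noteq> {}" by (rule neU)
      show "L' \<noteq> {}" by (rule False)
      show "U \<inter> L' = {}" using dj L'_def by blast
    qed
    have IH': "cnt_rel U L'" using IH[OF _ H'] cL by simp
    have zmin: "Min L \<noteq> z"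
    proof
      assume "Min L = z"
      have "\<forall>x\<in>L. x = z"
      proof
        fix x assume "x \<in> L"
        then have "Min L \<le> x" "x \<le> Max L" using fL by simp_all
        then show "x = z" using \<open>Min L = z\<close> z_def by simp
      qed
      then show False using False L'_def by blast
    qed
    have minL': "Min L' = Min L"
    proof (rule Min_eqI[OF fL'])
      show "Min L \<in> L'" using zmin fL neL L'_def by simp
      show "\<And>y. y \<in> L' \<Longrightarrow> Min L \<le> y" using L'_def fL by simp
    qed
    have mL': "Max L' \<in> L'" using fL' False by simp
    have mL'L: "Max L' \<in> L" using mL' L'_def by blast
    have "Max L' \<noteq> z" using mL' L'_def by blast
    moreover have "Max L' \<le> z" using mL'L fL z_def by (metis Max_ge)
    ultimately have "Max L' < z" by simp
    note mL'L this
    then obtain u where u: "u \<in> U" "Max L' < u" "u < z" using aLU zL unfolding alt_def by blast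
    have "u \<le> Max U" using fU u by simp
    then have "Max L' < Max U" using u by simp
    then show ?thesis using IH' cL minL' lt z_def unfolding cnt_rel_def by simp
  qed
qed

lemma cnt_alt:
  assumes "alt_hyps U L"
  shows "cnt_rel U L"
  using assms
proof (induction "card U + card L" arbitrary: U L rule: less_induct)
  case less
  have h: "finite U" "finite L" "U \<noteq> {}" "L \<noteq> {}" "U \<inter> L = {}" using less.prems unfolding alt_hyps_def by simp_all
  have "Max U \<in> U" "Max L \<in> L" using Max_in[OF h(1) h(3)] Max_in[OF h(2) h(4)] by simp_all
  then have "Max U \<noteq> Max L" using h(5) by (metis IntI empty_iff)
  then show ?case
  proof (cases "Max U < Max L")
    case True
    show ?thesis
    proof (rule cnt_step[OF less.prems True])
      fix U' L' assume a1: "card U' + card L' < card U + card L" and a2: "alt_hyps U' L'"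
      then show "cnt_rel U' L'" by (rule less.hyps)
    qed
  next
    case False
    then have lt: "Max L < Max U" using \<open>Max U \<noteq> Max L\<close> by simp
    have "cnt_rel L U"
    proof (rule cnt_step[OF alt_hyps_sym[OF less.prems] lt])
      fix U' L' assume a1: "card U' + card L' < card L + card U" and a2: "alt_hyps U' L'"
      have "card U' + card L' < card U + card L" using a1 by linarith
      then show "cnt_rel U' L'" using a2 by (rule less.hyps)
    qed
    then show ?thesis using cnt_rel_sym[OF less.prems] by simp
  qed
qed

lemma end_arith:
  assumes "p \<le> 2" "q \<le> (2::nat)" "p \<noteq> q \<and> (p = 2 \<longrightarrow> q = 0)"
  shows "2 * (int q - int p) + 3 - 6 * (if p < q then 1 else 0) + (if p = 0 then 0 else if p = 1 then -1 else 1) - (if q = 0 then 0 else if q = 1 then -1 else (1::int)) \<le> 0"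
proof -
  have "p = 0 \<or> p = 1 \<or> p = 2" "q = 0 \<or> q = 1 \<or> q = 2" using assms by auto
  then show ?thesis using assms(3) by auto
qed

lemma psi_arith:
  "(cL::int) + X + Y = cU + 1 \<Longrightarrow> 2 * (pL - pU) + 3 - 6 * X + vU - vL \<le> 0 \<Longrightarrow>
   2 * (qL - qU) + 3 - 6 * Y + wU - wL \<le> 0 \<Longrightarrow>
   2 * (3 * (cL - 1) - N + pL + qL) - vL - wL \<le> 2 * (3 * (cU - 1) - N + pU + qU) - vU - wU"
  by (simp add: algebra_simps)


locale esg =
  fixes E :: "nat \<Rightarrow> nat \<Rightarrow> bool" and M n :: nat
  assumes rng: "E i j \<Longrightarrow> 1 \<le> i \<and> i \<le> M \<and> 2 \<le> j \<and> j + 1 \<le> n"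
  and indH: "E i j \<Longrightarrow> \<not> E i (j + 1)"
  and indV: "E i j \<Longrightarrow> \<not> E (i + 1) j"
  and dom: "\<lbrakk>1 \<le> i; i \<le> M; 2 \<le> j; j + 1 \<le> n; \<not> E i j\<rbrakk> \<Longrightarrow> E i (j - 1) \<or> E i (j + 1) \<or> E (i + 1) j"
  and priv: "E i j \<Longrightarrow> (3 \<le> j \<and> \<not> E i (j - 2) \<and> \<not> E (i + 1) (j - 1)) \<or>
      (j + 2 \<le> n \<and> \<not> E i (j + 2) \<and> \<not> E (i + 1) (j + 1)) \<or>
      (2 \<le> i \<and> \<not> E (i - 1) (j - 1) \<and> \<not> E (i - 1) j \<and> \<not> E (i - 1) (j + 1))"
  and n4: "4 \<le> n" and M2: "2 \<le> M"
begin

definition R :: "nat \<Rightarrow> nat set" where "R i = {j. E i j}"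

lemma finR: "finite (R i)"
proof (rule finite_subset[of _ "{..n}"])
  show "R i \<subseteq> {..n}" unfolding R_def using rng by fastforce
qed simp

lemma indH': "E i (j + 1) \<Longrightarrow> \<not> E i j" using indH by blast
lemma indV': "E (i + 1) j \<Longrightarrow> \<not> E i j" using indV by blast

lemma nE0: "\<not> E 0 j" using rng by fastforce
lemma nEbig: "\<not> E (M + 1) j" using rng by fastforce
lemma nE1: "\<not> E i 1" using rng by fastforce
lemma nEn: "\<not> E i n" using rng by fastforce

lemma first3:
  assumes "1 \<le> i" "i \<le> M" shows "E i 2 \<or> E i 3 \<or> E i 4"
proof (rule ccontr)
  assume c: "\<not> (E i 2 \<or> E i 3 \<or> E i 4)"
  have "E i (2 - 1) \<or> E i (2 + 1) \<or> E (i + 1) 2" using dom[of i 2] assms c n4 by simp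
  then have a: "E (i + 1) 2" using c nE1 by simp
  have "E i (3 - 1) \<or> E i (3 + 1) \<or> E (i + 1) 3" using dom[of i 3] assms c n4 by simp
  then have b: "E (i + 1) 3" using c by simp
  show False using indH[OF a] b by simp
qed

lemma first4:
  assumes "1 \<le> i" "i \<le> M" "\<not> E i 2" "\<not> E i 3" shows "E (i + 1) 2"
proof -
  have "E i (2 - 1) \<or> E i (2 + 1) \<or> E (i + 1) 2" using dom[of i 2] assms n4 by simp
  then show ?thesis using assms nE1 by simp
qed

lemma narith: "n - 1 - 1 = n - 2" "n - 2 + 1 = n - 1" "n - 1 + 1 = n" "n - 2 - 1 = n - 3" "n - 3 + 1 = n - 2"
  "n - 1 - 2 = n - 3" "n - 3 + 2 = n - 1"
  using n4 by auto

lemma last3: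
  assumes "1 \<le> i" "i \<le> M" shows "E i (n - 1) \<or> E i (n - 2) \<or> E i (n - 3)"
proof (rule ccontr)
  assume c: "\<not> (E i (n - 1) \<or> E i (n - 2) \<or> E i (n - 3))"
  have "E i (n - 1 - 1) \<or> E i (n - 1 + 1) \<or> E (i + 1) (n - 1)" using dom[of i "n - 1"] assms c n4 by simp
  then have a: "E (i + 1) (n - 1)" using c nEn narith by simp
  have "E i (n - 2 - 1) \<or> E i (n - 2 + 1) \<or> E (i + 1) (n - 2)" using dom[of i "n - 2"] assms c n4 by simp
  then have b: "E (i + 1) (n - 2)" using c narith by simp
  show False using indH[OF b] a narith by simp
qed

lemma last4:
  assumes "1 \<le> i" "i \<le> M" "\<not> E i (n - 1)" "\<not> E i (n - 2)" shows "E (i + 1) (n - 1)"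
proof -
  have "E i (n - 1 - 1) \<or> E i (n - 1 + 1) \<or> E (i + 1) (n - 1)" using dom[of i "n - 1"] assms n4 by simp
  then show ?thesis using assms nEn narith by simp
qed

lemma bottom_first: "E M 2 \<or> E M 3"
  using first3[of M] first4[of M] nEbig M2 by auto

lemma bottom_last: "E M (n - 1) \<or> E M (n - 2)"
  using last3[of M] last4[of M] nEbig M2 by auto

lemma row1_left: "E 1 2 \<Longrightarrow> \<not> E 2 3"
  using priv[of 1 2] by (simp add: numeral_eq_Suc)

lemma row1_right: "E 1 (n - 1) \<Longrightarrow> \<not> E 2 (n - 2)"
  using priv[of 1 "n - 1"] narith n4 by (simp add: numeral_eq_Suc)

lemma row2_left: "\<not> (\<not> E 2 2 \<and> E 2 3)"
proof -
  have "E 1 2 \<or> E 1 3 \<or> E 1 4" using first3[of 1] M2 by simp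
  moreover have "E 1 3 \<Longrightarrow> \<not> E 2 3" using indV[of 1 3] by (simp add: numeral_eq_Suc)
  moreover have "\<not> E 1 2 \<Longrightarrow> \<not> E 1 3 \<Longrightarrow> E 2 2" using first4[of 1] M2 by (simp add: numeral_eq_Suc)
  ultimately show ?thesis using row1_left by blast
qed

lemma row2_right: "\<not> (\<not> E 2 (n - 1) \<and> E 2 (n - 2))"
proof -
  have "E 1 (n - 1) \<or> E 1 (n - 2) \<or> E 1 (n - 3)" using last3[of 1] M2 by simp
  moreover have "E 1 (n - 2) \<Longrightarrow> \<not> E 2 (n - 2)" using indV[of 1 "n - 2"] by (simp add: numeral_eq_Suc)
  moreover have "\<not> E 1 (n - 1) \<Longrightarrow> \<not> E 1 (n - 2) \<Longrightarrow> E 2 (n - 1)" using last4[of 1] M2 by (simp add: numeral_eq_Suc)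
  ultimately show ?thesis using row1_right by blast
qed


lemma alt_low:
  assumes i1: "1 \<le> i" and iM: "i + 1 \<le> M"
  shows "alt (R (i + 1)) (R i)"
  unfolding alt_def
proof (intro ballI impI)
  fix x y assume "x \<in> R (i + 1)" "y \<in> R (i + 1)" and xy: "x < y"
  then have ex: "E (i + 1) x" and ey: "E (i + 1) y" unfolding R_def by auto
  have "y \<noteq> x + 1" using indH[OF ex] ey by auto
  then have y2: "x + 2 \<le> y" using xy by simp
  have rx: "2 \<le> x" using rng[OF ex] by simp
  have ry: "y + 1 \<le> n" using rng[OF ey] by simp
  show "\<exists>z\<in>R i. x < z \<and> z < y"
  proof (cases "E i (x + 1)")
    case True
    then show ?thesis using y2 unfolding R_def by auto
  next
    case False
    have d: "E i (x + 1 - 1) \<or> E i (x + 1 + 1) \<or> E (i + 1) (x + 1)"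
      using dom[of i "x + 1"] i1 iM False rx ry y2 by simp
    have "\<not> E i x" using indV' ex by blast
    moreover have "\<not> E (i + 1) (x + 1)" using indH ex by blast
    ultimately have e2: "E i (x + 2)" using d by simp
    have "x + 2 \<noteq> y" using e2 indV ey by blast
    then show ?thesis using e2 y2 unfolding R_def by auto
  qed
qed

lemma alt_up:
  assumes i1: "1 \<le> i" and iM: "i + 1 \<le> M"
  shows "alt (R i) (R (i + 1))"
  unfolding alt_def
proof (intro ballI impI)
  fix x y assume "x \<in> R i" "y \<in> R i" and xy: "x < y"
  then have ex: "E i x" and ey: "E i y" unfolding R_def by auto
  show "\<exists>z\<in>R (i + 1). x < z \<and> z < y"
  proof (rule ccontr)
    assume "\<not> (\<exists>z\<in>R (i + 1). x < z \<and> z < y)"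
    then have nov: "\<And>v. x < v \<Longrightarrow> v < y \<Longrightarrow> \<not> E (i + 1) v" unfolding R_def by auto
    have "y \<noteq> x + 1" using indH[OF ex] ey by auto
    then have y2: "x + 2 \<le> y" using xy by simp
    have rx: "2 \<le> x" using rng[OF ex] by simp
    have ry: "y + 1 \<le> n" using rng[OF ey] by simp
    have nx: "\<not> E (i + 1) x" using indV ex by blast
    have ny: "\<not> E (i + 1) y" using indV ey by blast
    have c1: "\<not> E (i + 1) (x + 1)" using nov y2 by simp
    have d1: "E (i + 1) (x + 1 - 1) \<or> E (i + 1) (x + 1 + 1) \<or> E (i + 1 + 1) (x + 1)"
      using dom[of "i + 1" "x + 1"] iM c1 rx ry y2 by simp
    show False
    proof (cases "x + 3 \<le> y")
      case True
      have c2: "\<not> E (i + 1) (x + 2)" using nov True by simp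
      have c3: "\<not> E (i + 1) (x + 3)"
      proof (cases "x + 3 = y")
        case True then show ?thesis using ny by simp
      next
        case False then show ?thesis using nov \<open>x + 3 \<le> y\<close> by simp
      qed
      have a: "E (i + 2) (x + 1)" using d1 nx c2 by (simp add: numeral_eq_Suc)
      have d2: "E (i + 1) (x + 2 - 1) \<or> E (i + 1) (x + 2 + 1) \<or> E (i + 1 + 1) (x + 2)"
        using dom[of "i + 1" "x + 2"] iM c2 rx ry True by simp
      have b: "E (i + 2) (x + 2)" using d2 c1 c3 by (simp add: numeral_eq_Suc)
      show False using indH[OF a] b by (simp add: numeral_eq_Suc)
    next
      case False
      then have yx: "y = x + 2" using y2 by simp
      have a: "E (i + 2) (x + 1)" using d1 nx ny yx by (simp add: numeral_eq_Suc)
      have na: "\<not> E (i + 2) x" using indH' a by blast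
      have nb: "\<not> E (i + 2) (x + 2)" using indH a by (simp add: numeral_eq_Suc)
      have d0: "E (i + 1) (x - 1) \<or> E (i + 1) (x + 1) \<or> E (i + 1 + 1) x"
        using dom[of "i + 1" x] iM nx rx ry y2 by simp
      have l: "E (i + 1) (x - 1)" using d0 c1 na by (simp add: numeral_eq_Suc)
      have d3: "E (i + 1) (x + 2 - 1) \<or> E (i + 1) (x + 2 + 1) \<or> E (i + 1 + 1) (x + 2)"
        using dom[of "i + 1" "x + 2"] iM ny yx rx ry by simp
      have r: "E (i + 1) (x + 3)" using d3 c1 nb by (simp add: numeral_eq_Suc)
      have p1: "2 \<le> i \<and> \<not> E (i - 1) (x - 1) \<and> \<not> E (i - 1) x \<and> \<not> E (i - 1) (x + 1)"
        using priv[OF ex] l ey yx by (auto simp: numeral_eq_Suc)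
      have p2: "\<not> E (i - 1) (x + 2)"
        using priv[OF ey] ex r yx by (auto simp: numeral_eq_Suc)
      have i2: "2 \<le> i" using p1 by simp
      have q1: "1 \<le> i - 1" "i - 1 \<le> M" using i2 iM by auto
      have q2: "2 \<le> x + 1" "x + 1 + 1 \<le> n" using rx ry yx by auto
      have d4: "E (i - 1) (x + 1 - 1) \<or> E (i - 1) (x + 1 + 1) \<or> E (i - 1 + 1) (x + 1)"
        using dom[OF q1 q2] p1 by simp
      have "i - 1 + 1 = i" using i2 by simp
      then show False using d4 p1 p2 indH[OF ex] by simp
    qed
  qed
qed

lemma neR: "1 \<le> i \<Longrightarrow> i \<le> M \<Longrightarrow> R i \<noteq> {}"
  using first3 unfolding R_def by blast

lemma disjR: "R i \<inter> R (i + 1) = {}"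
  using indV unfolding R_def by blast

definition fm :: "nat \<Rightarrow> nat" where "fm i = (if E i 2 then 2 else if E i 3 then 3 else 4)"
definition lm :: "nat \<Rightarrow> nat" where "lm i = (if E i (n - 1) then n - 1 else if E i (n - 2) then n - 2 else n - 3)"

lemma minR:
  assumes "1 \<le> i" "i \<le> M" shows "Min (R i) = fm i"
proof (rule Min_eqI[OF finR])
  show "fm i \<in> R i" using first3[OF assms] unfolding R_def fm_def by auto
  fix y assume "y \<in> R i"
  then have ey: "E i y" unfolding R_def by simp
  then have "2 \<le> y" using rng by blast
  then show "fm i \<le> y" using ey unfolding fm_def by (cases "y = 2"; cases "y = 3"; auto)
qed

lemma maxR:
  assumes "1 \<le> i" "i \<le> M" shows "Max (R i) = lm i"
proof (rule Max_eqI[OF finR])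
  show "lm i \<in> R i" using last3[OF assms] unfolding R_def lm_def by auto
  fix y assume "y \<in> R i"
  then have ey: "E i y" unfolding R_def by simp
  then have "y + 1 \<le> n" using rng by blast
  then show "y \<le> lm i" using ey n4 unfolding lm_def by (cases "y = n - 1"; cases "y = n - 2"; auto)
qed

lemma althyps: "1 \<le> i \<Longrightarrow> i + 1 \<le> M \<Longrightarrow> alt_hyps (R i) (R (i + 1))"
  unfolding alt_hyps_def using finR neR disjR alt_up alt_low by simp

lemma cnt_rows:
  assumes "1 \<le> i" "i + 1 \<le> M"
  shows "int (card (R (i + 1))) + (if fm i < fm (i + 1) then 1 else 0) + (if lm (i + 1) < lm i then 1 else 0) = int (card (R i)) + 1"
  using cnt_alt[OF althyps[OF assms]] minR maxR assms unfolding cnt_rel_def by simp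


definition al :: "nat \<Rightarrow> nat" where "al i = fm i - 2"
definition be :: "nat \<Rightarrow> nat" where "be i = n - 1 - lm i"
definition V :: "nat \<Rightarrow> int" where "V p = (if p = 0 then 0 else if p = 1 then -1 else 1)"
definition delta :: "nat \<Rightarrow> int" where
  "delta i = 3 * (int (card (R i)) - 1) - (int n - 3) + int (al i) + int (be i)"
definition Psi :: "nat \<Rightarrow> int" where "Psi i = 2 * delta i - V (al i) - V (be i)"

lemma fm_al: "fm i = al i + 2" unfolding al_def fm_def by simp
lemma lm_be: "lm i + be i = n - 1" unfolding be_def lm_def using n4 by auto
lemma al0: "al i = 0 \<longleftrightarrow> E i 2" unfolding al_def fm_def by simp
lemma al1: "al i = 1 \<longleftrightarrow> \<not> E i 2 \<and> E i 3" unfolding al_def fm_def by simp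
lemma al2: "al i = 2 \<longleftrightarrow> \<not> E i 2 \<and> \<not> E i 3" unfolding al_def fm_def by simp
lemma be0: "be i = 0 \<longleftrightarrow> E i (n - 1)" unfolding be_def lm_def using n4 by auto
lemma be1: "be i = 1 \<longleftrightarrow> \<not> E i (n - 1) \<and> E i (n - 2)" unfolding be_def lm_def using n4 by auto
lemma be2: "be i = 2 \<longleftrightarrow> \<not> E i (n - 1) \<and> \<not> E i (n - 2)" unfolding be_def lm_def using n4 by auto
lemma al_le: "al i \<le> 2" unfolding al_def fm_def by simp
lemma be_le: "be i \<le> 2" unfolding be_def lm_def using n4 by auto

lemma al_step:
  assumes "1 \<le> i" "i + 1 \<le> M"
  shows "al i \<noteq> al (i + 1) \<and> (al i = 2 \<longrightarrow> al (i + 1) = 0)"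
proof -
  have iM: "i \<le> M" using assms by simp
  have "al i = 0 \<or> al i = 1 \<or> al i = 2" using al_le[of i] by auto
  moreover have "al i = 0 \<Longrightarrow> al (i + 1) \<noteq> 0" using al0 indV by blast
  moreover have "al i = 1 \<Longrightarrow> al (i + 1) \<noteq> 1" using al1 indV by blast
  moreover have "al i = 2 \<Longrightarrow> al (i + 1) = 0" using al2 al0 first4[OF assms(1) iM] by blast
  ultimately show ?thesis by auto
qed

lemma be_step:
  assumes "1 \<le> i" "i + 1 \<le> M"
  shows "be i \<noteq> be (i + 1) \<and> (be i = 2 \<longrightarrow> be (i + 1) = 0)"
proof -
  have iM: "i \<le> M" using assms by simp
  have "be i = 0 \<or> be i = 1 \<or> be i = 2" using be_le[of i] by auto
  moreover have "be i = 0 \<Longrightarrow> be (i + 1) \<noteq> 0" using be0 indV by blast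
  moreover have "be i = 1 \<Longrightarrow> be (i + 1) \<noteq> 1" using be1 indV by blast
  moreover have "be i = 2 \<Longrightarrow> be (i + 1) = 0" using be2 be0 last4[OF assms(1) iM] by blast
  ultimately show ?thesis by auto
qed

lemma cnt_rows':
  assumes "1 \<le> i" "i + 1 \<le> M"
  shows "int (card (R (i + 1))) + (if al i < al (i + 1) then 1 else 0) + (if be i < be (i + 1) then 1 else 0) = int (card (R i)) + 1"
proof -
  have "(fm i < fm (i + 1)) = (al i < al (i + 1))" using fm_al by simp
  moreover have "(lm (i + 1) < lm i) = (be i < be (i + 1))" using lm_be[of i] lm_be[of "i + 1"] by linarith
  ultimately show ?thesis using cnt_rows[OF assms] by simp
qed

lemma Psi_step:
  assumes "1 \<le> i" "i + 1 \<le> M"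
  shows "Psi (i + 1) \<le> Psi i"
proof -
  have A1: "2 * (int (al (i + 1)) - int (al i)) + 3 - 6 * (if al i < al (i + 1) then 1 else 0) + V (al i) - V (al (i + 1)) \<le> 0"
    using end_arith[OF al_le[of i] al_le[of "i + 1"] al_step[OF assms]] unfolding V_def by simp
  have A2: "2 * (int (be (i + 1)) - int (be i)) + 3 - 6 * (if be i < be (i + 1) then 1 else 0) + V (be i) - V (be (i + 1)) \<le> 0"
    using end_arith[OF be_le[of i] be_le[of "i + 1"] be_step[OF assms]] unfolding V_def by simp
  show ?thesis using psi_arith[OF cnt_rows'[OF assms] A1 A2] unfolding Psi_def delta_def .
qed

lemma Psi_mono: "2 + k \<le> M \<Longrightarrow> Psi (2 + k) \<le> Psi 2"
proof (induction k)
  case 0 then show ?case by simp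
next
  case (Suc k)
  have "Psi (2 + k + 1) \<le> Psi (2 + k)" using Psi_step[of "2 + k"] Suc.prems by simp
  then show ?case using Suc by simp
qed

lemma row2_no2: "E 2 x \<Longrightarrow> \<not> E 2 (x + 2)"
proof
  assume a: "E 2 x" and b: "E 2 (x + 2)"
  have iV: "\<And>j. E 2 j \<Longrightarrow> \<not> E 1 j" using indV'[of 1] by (simp add: numeral_eq_Suc)
  have rx: "2 \<le> x" "x + 2 + 1 \<le> n" using rng[OF a] rng[OF b] by auto
  have c: "E 1 (x + 1)"
  proof (rule ccontr)
    assume nc: "\<not> E 1 (x + 1)"
    have "E 1 (x + 1 - 1) \<or> E 1 (x + 1 + 1) \<or> E (1 + 1) (x + 1)"
      using dom[of 1 "x + 1"] nc rx M2 by simp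
    then show False using iV[OF a] iV[OF b] indH[OF a] by (simp add: numeral_eq_Suc)
  qed
  show False using priv[OF c] a b by (simp add: numeral_eq_Suc)
qed

lemma delta2: "delta 2 \<le> 0"
proof -
  have sep: "\<forall>x\<in>R 2. \<forall>y\<in>R 2. x < y \<longrightarrow> x + 3 \<le> y"
  proof (intro ballI impI)
    fix x y assume "x \<in> R 2" "y \<in> R 2" "x < y"
    then have ex: "E 2 x" and ey: "E 2 y" and xy: "x < y" unfolding R_def by auto
    have "y \<noteq> x + 1" using indH[OF ex] ey by auto
    moreover have "y \<noteq> x + 2" using row2_no2[OF ex] ey by auto
    ultimately show "x + 3 \<le> y" using xy by simp
  qed
  have "3 * (int (card (R 2)) - 1) \<le> int (Max (R 2)) - int (Min (R 2))"
    using gapB[OF finR neR sep] M2 by simp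
  then have "3 * (int (card (R 2)) - 1) \<le> int (lm 2) - int (fm 2)" using minR[of 2] maxR[of 2] M2 by simp
  moreover have "int (lm 2) = int n - 1 - int (be 2)" using lm_be[of 2] n4 by linarith
  moreover have "int (fm 2) = int (al 2) + 2" using fm_al by simp
  ultimately show ?thesis unfolding delta_def by linarith
qed

lemma Psi2: "Psi 2 \<le> 0"
proof -
  have "al 2 \<noteq> 1" using row2_left al1 by blast
  then have "V (al 2) \<ge> 0" unfolding V_def by simp
  moreover have "be 2 \<noteq> 1" using row2_right be1 by blast
  then have "V (be 2) \<ge> 0" unfolding V_def by simp
  ultimately show ?thesis using delta2 unfolding Psi_def by linarith
qed

lemma deltaM: "delta M \<ge> (if (\<exists>x\<in>R M. x + 2 \<in> R M) then 1 else 0)"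
proof -
  have nadj: "\<forall>x\<in>R M. Suc x \<notin> R M" using indH unfolding R_def by simp
  have succ: "\<forall>x\<in>R M. x < Max (R M) \<longrightarrow> (\<exists>y\<in>R M. x < y \<and> y \<le> x + 3)"
  proof (intro ballI impI)
    fix x assume "x \<in> R M" and xl: "x < Max (R M)"
    then have ex: "E M x" unfolding R_def by simp
    have mR: "Max (R M) \<in> R M" using finR neR[of M] M2 by simp
    then have em: "E M (Max (R M))" unfolding R_def by simp
    have "Max (R M) \<noteq> x + 1" using indH[OF ex] em by auto
    then have m2: "x + 2 \<le> Max (R M)" using xl by simp
    have rm: "Max (R M) + 1 \<le> n" using rng[OF em] by simp
    have rx: "2 \<le> x" using rng[OF ex] by simp
    show "\<exists>y\<in>R M. x < y \<and> y \<le> x + 3"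
    proof (cases "E M (x + 2)")
      case True then show ?thesis unfolding R_def by auto
    next
      case False
      have "E M (x + 2 - 1) \<or> E M (x + 2 + 1) \<or> E (M + 1) (x + 2)"
        using dom[of M "x + 2"] False M2 m2 rm rx by simp
      then have "E M (x + 3)" using indH[OF ex] nEbig by (simp add: numeral_eq_Suc)
      then show ?thesis unfolding R_def by auto
    qed
  qed
  have g: "int (Max (R M)) - int (Min (R M)) + (if (\<exists>x\<in>R M. x + 2 \<in> R M) then 1 else 0) \<le> 3 * (int (card (R M)) - 1)"
    using gapA[OF finR neR nadj succ] M2 by simp
  have "int (Max (R M)) = int n - 1 - int (be M)" using maxR[of M] lm_be[of M] M2 n4 by simp
  moreover have "int (Min (R M)) = int (al M) + 2" using minR[of M] fm_al M2 by simp
  ultimately show ?thesis using g unfolding delta_def by linarith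
qed

lemma bottom_main: "E M 2 \<and> E M (n - 1) \<and> (\<forall>x. E M x \<longrightarrow> \<not> E M (x + 2))"
proof -
  have eqM: "2 + (M - 2) = M" using M2 by simp
  have "Psi M \<le> Psi 2" using Psi_mono[of "M - 2", unfolded eqM] by simp
  then have pm: "Psi M \<le> 0" using Psi2 by simp
  have "al M \<noteq> 2" using al2 bottom_first by blast
  then have va: "V (al M) \<le> 0" and va0: "V (al M) = 0 \<Longrightarrow> al M = 0" unfolding V_def using al_le[of M] by (auto split: if_splits)
  have "be M \<noteq> 2" using be2 bottom_last by blast
  then have vb: "V (be M) \<le> 0" and vb0: "V (be M) = 0 \<Longrightarrow> be M = 0" unfolding V_def using be_le[of M] by (auto split: if_splits)
  obtain g where gdef: "g = (if (\<exists>x\<in>R M. x + 2 \<in> R M) then 1 else (0::int))" by blast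
  have dg: "delta M \<ge> g" using deltaM gdef by simp
  have g00: "g \<ge> 0" using gdef by simp
  have pm': "2 * delta M - V (al M) - V (be M) \<le> 0" using pm unfolding Psi_def by simp
  have g0: "g = 0" using dg g00 pm' va vb by linarith
  have "V (al M) = 0" using dg g00 pm' va vb by linarith
  then have "E M 2" using va0 al0 by blast
  moreover have "V (be M) = 0" using dg g00 pm' va vb by linarith
  then have "E M (n - 1)" using vb0 be0 by blast
  moreover have "\<forall>x. E M x \<longrightarrow> \<not> E M (x + 2)"
  proof (intro allI impI)
    fix x assume "E M x"
    then show "\<not> E M (x + 2)" using g0 gdef unfolding R_def by (auto split: if_splits)
  qed
  ultimately show ?thesis by blast
qed

lemma bottom_row: "2 \<le> j \<Longrightarrow> j + 1 \<le> n \<Longrightarrow> (E M j \<longleftrightarrow> j mod 3 = 2)"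
proof (induction j rule: less_induct)
  case (less j)
  have b: "E M 2" "E M (n - 1)" "\<And>x. E M x \<Longrightarrow> \<not> E M (x + 2)" using bottom_main by auto
  show ?case
  proof (cases "j \<le> 4")
    case True
    then have "j = 2 \<or> j = 3 \<or> j = 4" using less.prems by auto
    moreover have "\<not> E M 3" using indH[OF b(1)] by simp
    moreover have "\<not> E M 4" using b(3)[OF b(1)] by simp
    ultimately show ?thesis using b(1) by auto
  next
    case False
    have IH: "E M (j - 3) \<longleftrightarrow> (j - 3) mod 3 = 2" using less.IH[of "j - 3"] False less.prems by simp
    have jj: "j = (j - 3) + 3" using False by simp
    have md: "(j - 3) mod 3 = j mod 3" using mod_add_self2[of "j - 3" 3] jj by simp
    have "E M j \<longleftrightarrow> E M (j - 3)"
    proof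
      assume ej: "E M j"
      have n1: "\<not> E M (j - 1)" using indH'[of M "j - 1"] ej False by simp
      have jj2: "j - 2 + 2 = j" using False by simp
      have n2: "\<not> E M (j - 2)" using b(3)[of "j - 2"] ej jj2 by auto
      have "E M (j - 2 - 1) \<or> E M (j - 2 + 1) \<or> E (M + 1) (j - 2)"
        using dom[of M "j - 2"] n2 M2 False less.prems by simp
      moreover have "j - 2 + 1 = j - 1" "j - 2 - 1 = j - 3" using False by auto
      ultimately show "E M (j - 3)" using n1 nEbig by simp
    next
      assume e3: "E M (j - 3)"
      have q: "j - 3 + 1 = j - 2" "j - 3 + 2 = j - 1" using False by auto
      have n1: "\<not> E M (j - 2)" using indH[OF e3] q(1) by metis
      have n2: "\<not> E M (j - 1)" using b(3)[OF e3] q(2) by metis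
      have "E M (j - 1 - 1) \<or> E M (j - 1 + 1) \<or> E (M + 1) (j - 1)"
        using dom[of M "j - 1"] n2 M2 False less.prems by simp
      moreover have "j - 1 + 1 = j" "j - 1 - 1 = j - 2" using False by auto
      ultimately show "E M j" using n1 nEbig by simp
    qed
    then show ?thesis using IH md by simp
  qed
qed

lemma final: "3 dvd n \<and> (\<forall>j. 2 \<le> j \<and> j + 1 \<le> n \<longrightarrow> (E M j \<longleftrightarrow> j mod 3 = 2))"
proof -
  have "E M (n - 1)" using bottom_main by blast
  then have "(n - 1) mod 3 = 2" using bottom_row[of "n - 1"] n4 by simp
  moreover have "n = (n - 1) + 1" using n4 by simp
  ultimately have "n mod 3 = (2 + 1) mod 3" by (metis mod_Suc_eq Suc_eq_plus1)
  then have "3 dvd n" by (simp add: dvd_eq_mod_eq_0)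
  then show ?thesis using bottom_row by blast
qed

end


lemma ES_basic:
  assumes "ES_config m n C"
  shows "permissible m n C"
    and "\<And>i j. in_grid m n i j \<Longrightarrow> \<not> C i j \<Longrightarrow> 2 \<le> j \<and> j + 1 \<le> n \<and> i + 1 \<le> m \<and> C i (j - 1) \<and> C i (j + 1) \<and> C (i + 1) j"
    and "\<And>i j. in_grid m n i j \<Longrightarrow> \<not> C i j \<Longrightarrow> (\<exists>a b. in_grid m n a b \<and> C a b \<and> blocked m n (add_house C i j) a b)"
proof -
  have mx: "maximal m n C" and pr: "resistant_predators m n C" and ra: "resistant_altruists m n C"
    using assms unfolding ES_config_def by auto
  show "permissible m n C" using mx unfolding maximal_def by simp
  fix i j assume g: "in_grid m n i j" and c: "\<not> C i j"
  have b: "blocked m n (add_house C i j) i j" using pr g c unfolding resistant_predators_def by blast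
  have "j - 1 \<noteq> j" using b unfolding blocked_def by auto
  then show "2 \<le> j \<and> j + 1 \<le> n \<and> i + 1 \<le> m \<and> C i (j - 1) \<and> C i (j + 1) \<and> C (i + 1) j"
    using b unfolding blocked_def add_house_def in_grid_def by auto
next
  fix i j assume g: "in_grid m n i j" and c: "\<not> C i j"
  show "\<exists>a b. in_grid m n a b \<and> C a b \<and> blocked m n (add_house C i j) a b"
    using assms g c unfolding ES_config_def resistant_altruists_def by blast
qed

lemma ES_esg:
  assumes m2: "m > 2" and n4: "n \<ge> 4" and es: "ES_config m n C"
  shows "esg (\<lambda>i j. 1 \<le> i \<and> i \<le> m - 1 \<and> 2 \<le> j \<and> j + 1 \<le> n \<and> \<not> C i j) (m - 1) n"
proof -
  define E where "E = (\<lambda>i j. 1 \<le> i \<and> i \<le> m - 1 \<and> 2 \<le> j \<and> j + 1 \<le> n \<and> \<not> C i j)"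
  have perm: "permissible m n C" using ES_basic(1)[OF es] .
  have P1: "\<And>i j. in_grid m n i j \<Longrightarrow> \<not> C i j \<Longrightarrow> 2 \<le> j \<and> j + 1 \<le> n \<and> i + 1 \<le> m \<and> C i (j - 1) \<and> C i (j + 1) \<and> C (i + 1) j"
    using ES_basic(2)[OF es] by blast
  have P3: "\<And>i j. in_grid m n i j \<Longrightarrow> \<not> C i j \<Longrightarrow> (\<exists>a b. in_grid m n a b \<and> C a b \<and> blocked m n (add_house C i j) a b)"
    using ES_basic(3)[OF es] by blast
  have EC: "\<And>i j. E i j \<Longrightarrow> in_grid m n i j \<and> \<not> C i j" unfolding E_def in_grid_def by auto
  have CE: "\<And>i j. 1 \<le> i \<Longrightarrow> i \<le> m \<Longrightarrow> 1 \<le> j \<Longrightarrow> j \<le> n \<Longrightarrow> \<not> C i j \<Longrightarrow> E i j"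
  proof -
    fix i j assume a: "1 \<le> i" "i \<le> m" "1 \<le> j" "j \<le> n" "\<not> C i j"
    then have "in_grid m n i j" unfolding in_grid_def by simp
    then show "E i j" using P1[of i j] a unfolding E_def by auto
  qed
  have "esg E (m - 1) n"
  proof
    fix i j assume "E i j" then show "1 \<le> i \<and> i \<le> m - 1 \<and> 2 \<le> j \<and> j + 1 \<le> n" unfolding E_def by simp
  next
    fix i j assume "E i j" then show "\<not> E i (j + 1)" using P1[of i j] EC unfolding E_def by blast
  next
    fix i j assume "E i j" then show "\<not> E (i + 1) j" using P1[of i j] EC unfolding E_def by blast
  next
    fix i j assume a: "1 \<le> i" "i \<le> m - 1" "2 \<le> j" "j + 1 \<le> n" "\<not> E i j"
    then have cij: "C i j" unfolding E_def by simp
    have g: "in_grid m n i j" using a m2 unfolding in_grid_def by simp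
    have "\<not> blocked m n C i j" using perm g unfolding permissible_def by blast
    moreover have "in_grid m n i (j - 1)" "in_grid m n i (j + 1)" "in_grid m n (i + 1) j"
      using a m2 unfolding in_grid_def by auto
    ultimately have "\<not> C i (j - 1) \<or> \<not> C i (j + 1) \<or> \<not> C (i + 1) j"
      using a cij g unfolding blocked_def by auto
    moreover have "\<not> C i (j - 1) \<Longrightarrow> E i (j - 1)"
      by (rule CE) (use a m2 in auto)
    moreover have "\<not> C i (j + 1) \<Longrightarrow> E i (j + 1)"
      by (rule CE) (use a m2 in auto)
    moreover have "\<not> C (i + 1) j \<Longrightarrow> E (i + 1) j"
      by (rule CE) (use a m2 in auto)
    ultimately show "E i (j - 1) \<or> E i (j + 1) \<or> E (i + 1) j" by blast
  next
    fix i j assume e: "E i j"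
    have g: "in_grid m n i j" and c: "\<not> C i j" using EC[OF e] by auto
    obtain a b where ga: "in_grid m n a b" and cab: "C a b" and bl: "blocked m n (add_house C i j) a b"
      using P3[OF g c] by blast
    have nb: "\<not> blocked m n C a b" using perm ga unfolding permissible_def by blast
    have ab: "(a, b) \<noteq> (i, j)" using cab c by auto
    have bl': "in_grid m n a b \<and> 2 \<le> b \<and> in_grid m n a (b - 1) \<and> add_house C i j a (b - 1) \<and>
       in_grid m n a (b + 1) \<and> add_house C i j a (b + 1) \<and> in_grid m n (a + 1) b \<and> add_house C i j (a + 1) b"
      using bl unfolding blocked_def by simp
    have cases: "(a = i \<and> b - 1 = j) \<or> (a = i \<and> b + 1 = j) \<or> (a + 1 = i \<and> b = j)"
    proof (rule ccontr)
      assume "\<not> ?thesis"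
      then have "C a (b - 1) \<and> C a (b + 1) \<and> C (a + 1) b" using bl' unfolding add_house_def by (auto split: if_splits)
      then have "blocked m n C a b" using bl' cab unfolding blocked_def by simp
      then show False using nb by simp
    qed
    have nE: "\<And>x y. C x y \<Longrightarrow> \<not> E x y" unfolding E_def by simp
    show "(3 \<le> j \<and> \<not> E i (j - 2) \<and> \<not> E (i + 1) (j - 1)) \<or>
      (j + 2 \<le> n \<and> \<not> E i (j + 2) \<and> \<not> E (i + 1) (j + 1)) \<or>
      (2 \<le> i \<and> \<not> E (i - 1) (j - 1) \<and> \<not> E (i - 1) j \<and> \<not> E (i - 1) (j + 1))"
    proof -
      consider (R) "a = i \<and> b - 1 = j" | (L) "a = i \<and> b + 1 = j" | (U) "a + 1 = i \<and> b = j" using cases by blast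
      then show ?thesis
      proof cases
        case R
        then have bj: "b = j + 1" "a = i" using bl' by auto
        have "C i (j + 2)" using bl' bj unfolding add_house_def by (simp add: numeral_eq_Suc)
        moreover have "C (i + 1) (j + 1)" using bl' bj unfolding add_house_def by simp
        moreover have "j + 2 \<le> n" using bl' bj unfolding in_grid_def by simp
        ultimately show ?thesis using nE by blast
      next
        case L
        then have bj: "b = j - 1" "a = i" "3 \<le> j" using bl' by auto
        have "b - 1 = j - 2" using bj by simp
        then have "C i (j - 2)" using bl' bj unfolding add_house_def by (auto split: if_splits)
        moreover have "C (i + 1) (j - 1)" using bl' bj unfolding add_house_def by (auto split: if_splits)
        ultimately show ?thesis using nE bj by blast
      next
        case U
        then have bj: "b = j" "a = i - 1" "2 \<le> i" using ga unfolding in_grid_def by auto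
        have "C (i - 1) (j - 1)" using bl' bj unfolding add_house_def by (auto split: if_splits)
        moreover have "C (i - 1) (j + 1)" using bl' bj unfolding add_house_def by (auto split: if_splits)
        moreover have "C (i - 1) j" using cab bj by simp
        ultimately show ?thesis using nE bj by blast
      qed
    qed
  next
    show "4 \<le> n" by (rule n4)
  next
    show "2 \<le> m - 1" using m2 by simp
  qed
  then show ?thesis unfolding E_def .
qed

theorem mainTheorem13:
  fixes m n :: nat and C :: "nat \<Rightarrow> nat \<Rightarrow> bool"
  assumes "m > 2" and "n > 2" and "ES_config m n C"
  shows "3 dvd n \<and> (\<forall>j. 1 \<le> j \<and> j \<le> n \<longrightarrow> C m j)
    \<and> (\<forall>j. 1 \<le> j \<and> j \<le> n \<longrightarrow> (C (m - 1) j \<longleftrightarrow> j mod 3 \<noteq> 2))"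
proof -
  have P1: "\<And>i j. in_grid m n i j \<Longrightarrow> \<not> C i j \<Longrightarrow> 2 \<le> j \<and> j + 1 \<le> n \<and> i + 1 \<le> m \<and> C i (j - 1) \<and> C i (j + 1) \<and> C (i + 1) j"
    using ES_basic(2)[OF assms(3)] by blast
  have perm: "permissible m n C" using ES_basic(1)[OF assms(3)] .
  have rowm: "\<forall>j. 1 \<le> j \<and> j \<le> n \<longrightarrow> C m j"
  proof (intro allI impI)
    fix j assume "1 \<le> j \<and> j \<le> n"
    then have "in_grid m n m j" using assms(1) unfolding in_grid_def by simp
    then show "C m j" using P1[of m j] by auto
  qed
  have g1: "in_grid m n (m - 1) 1" "in_grid m n (m - 1) n" using assms(1,2) unfolding in_grid_def by auto
  have col1: "C (m - 1) 1" using P1[OF g1(1)] by fastforce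
  have coln: "C (m - 1) n" using P1[OF g1(2)] by fastforce
  show ?thesis
  proof (cases "n = 3")
    case True
    have g: "in_grid m n (m - 1) 2" using assms(1) True unfolding in_grid_def by simp
    have "\<not> blocked m n C (m - 1) 2" using perm g unfolding permissible_def by blast
    moreover have "C (m - 1) 1" "C (m - 1) 3" "C m 2" using col1 coln rowm True by auto
    ultimately have "\<not> C (m - 1) 2" using assms(1) True unfolding blocked_def in_grid_def by auto
    moreover have "\<And>j::nat. 1 \<le> j \<Longrightarrow> j \<le> 3 \<Longrightarrow> j = 1 \<or> j = 2 \<or> j = 3" by auto
    ultimately show ?thesis using rowm col1 coln True by fastforce
  next
    case False
    then have n4: "n \<ge> 4" using assms(2) by simp
    have es: "esg (\<lambda>i j. 1 \<le> i \<and> i \<le> m - 1 \<and> 2 \<le> j \<and> j + 1 \<le> n \<and> \<not> C i j) (m - 1) n"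
      using ES_esg[OF assms(1) n4 assms(3)] .
    have fin: "3 dvd n \<and> (\<forall>j. 2 \<le> j \<and> j + 1 \<le> n \<longrightarrow>
       ((1 \<le> m - 1 \<and> m - 1 \<le> m - 1 \<and> 2 \<le> j \<and> j + 1 \<le> n \<and> \<not> C (m - 1) j) \<longleftrightarrow> j mod 3 = 2))"
      using esg.final[OF es] by simp
    have row: "\<forall>j. 1 \<le> j \<and> j \<le> n \<longrightarrow> (C (m - 1) j \<longleftrightarrow> j mod 3 \<noteq> 2)"
    proof (intro allI impI)
      fix j assume j: "1 \<le> j \<and> j \<le> n"
      show "C (m - 1) j \<longleftrightarrow> j mod 3 \<noteq> 2"
      proof (cases "j = 1")
        case True then show ?thesis using col1 by simp
      next
        case False
        show ?thesis
        proof (cases "j = n")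
          case True
          then have "j mod 3 = 0" using fin by auto
          then show ?thesis using coln True by simp
        next
          case False
          then have "2 \<le> j \<and> j + 1 \<le> n" using j \<open>j \<noteq> 1\<close> by auto
          then show ?thesis using fin assms(1) by auto
        qed
      qed
    qed
    show ?thesis using fin rowm row by blast
  qed
qed

end
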